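(* Let $f(x,y)=\left(x+\frac1y,\ y-\frac1y-x\right)$ be the Hénon–Devaney map, with inverse $f^{-1}(u,v)=\left(u-\frac{1}{u+v},\ u+v\right)$, and write $f^{-k}(t,0)=(f^{-k}_x(t,0),f^{-k}_y(t,0))$ whenever defined. For $n\ge1$ let $S_n$ be the set of $t\in\mathbb{R}$ for which $f^{-n}(t,0)$ is defined and $f^{-j}_y(t,0)>-f^{-j}_x(t,0)$ for all $0\le j\le n-1$, and let $t_n\in S_n$ be a parameter with $f^{-n}_x(t_n,0)=0$. Then the sequence $\left(f^{-n}_y(t_n,0)\right)_{n\in\mathbb{N}}$ diverges.
   Context: Here $f^{0}(t,0)=(t,0)$, so the condition for $j=0$ reads $t>0$; e.g. $t_1=1$. *)

theory Defs
  imports Complex_Main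
begin

definition hd_map :: "real \<times> real \<Rightarrow> (real \<times> real) option" where
  "hd_map p = (if snd p = 0 then None
               else Some (fst p + 1 / snd p, snd p - 1 / snd p - fst p))"

definition hd_inv :: "real \<times> real \<Rightarrow> (real \<times> real) option" where
  "hd_inv p = (if fst p + snd p = 0 then None
               else Some (fst p - 1 / (fst p + snd p), fst p + snd p))"

fun hd_inv_iter :: "nat \<Rightarrow> real \<times> real \<Rightarrow> (real \<times> real) option" where
  "hd_inv_iter 0 p = Some p"
| "hd_inv_iter (Suc k) p = Option.bind (hd_inv_iter k p) hd_inv"

definition S_set :: "nat \<Rightarrow> real set" where
  "S_set n = {t. hd_inv_iter n (t, 0) \<noteq> None \<and>
      (\<forall>j<n. \<exists>p. hd_inv_iter j (t, 0) = Some p \<and> snd p > - fst p)}"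

end

theory Submission
  imports Defs
begin

lemma iter_Suc_Some:
  assumes "hd_inv_iter (Suc m) q = Some p"
  shows "\<exists>x y. hd_inv_iter m q = Some (x, y) \<and> x + y \<noteq> 0 \<and>
           p = (x - 1 / (x + y), x + y)"
proof -
  obtain r where r: "hd_inv_iter m q = Some r" "hd_inv r = Some p"
    using assms by (cases "hd_inv_iter m q") auto
  then show ?thesis
    by (cases r) (auto simp: hd_inv_def split: if_splits)
qed

lemma inv_bound:
  "hd_inv_iter m (t, 0) = Some (x, y) \<Longrightarrow>
   (\<forall>j<m. \<exists>p. hd_inv_iter j (t, 0) = Some p \<and> snd p > - fst p) \<Longrightarrow>
   y \<ge> real m * x"
proof (induction m arbitrary: x y)
  case 0
  then show ?case by simp
next
  case (Suc m)
  from iter_Suc_Some[OF Suc.prems(1)] obtain a b where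
    ab: "hd_inv_iter m (t, 0) = Some (a, b)" "a + b \<noteq> 0" "(x, y) = (a - 1 / (a + b), a + b)"
    by blast
  have IH: "b \<ge> real m * a" using Suc.IH[OF ab(1)] Suc.prems(2) by auto
  from Suc.prems(2) ab(1) have pos: "a + b > 0" by fastforce
  have "y = a + b" "x = a - 1/(a+b)" using ab(3) by auto
  moreover have "1/(a+b) > 0" using pos by simp
  ultimately have "x \<le> a" by linarith
  hence "real (Suc m) * x \<le> real (Suc m) * a" by (intro mult_left_mono) auto
  also have "\<dots> \<le> y" using IH \<open>y = a + b\<close> by (simp add: algebra_simps)
  finally show ?case .
qed

lemma sq_bound:
  assumes "t \<in> S_set (Suc m)" "hd_inv_iter (Suc m) (t, 0) = Some p" "fst p = 0"
  shows "(snd p)^2 \<ge> real (Suc m)"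
proof -
  have conds: "\<forall>j<Suc m. \<exists>p. hd_inv_iter j (t, 0) = Some p \<and> snd p > - fst p"
    using assms(1) by (simp add: S_set_def)
  from iter_Suc_Some[OF assms(2)] obtain a b where
    ab: "hd_inv_iter m (t, 0) = Some (a, b)" "a + b \<noteq> 0" "p = (a - 1 / (a + b), a + b)"
    by blast
  have IH: "b \<ge> real m * a" using inv_bound[OF ab(1)] conds by auto
  from conds ab(1) have pos: "a + b > 0" by fastforce
  have a: "a = 1/(a+b)" using assms(3) ab(3) by simp
  have "snd p \<ge> real (Suc m) * a" using IH ab(3) by (simp add: algebra_simps)
  hence "snd p * snd p \<ge> real (Suc m) * a * (a+b)"
  proof -
    have "snd p = a + b" using ab(3) by simp
    thus ?thesis using \<open>snd p \<ge> real (Suc m) * a\<close> pos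
      by (metis less_eq_real_def mult_right_mono)
  qed
  also have "real (Suc m) * a * (a+b) = real (Suc m)"
  proof -
    have "a * (a+b) = 1" using pos a by (metis less_irrefl nonzero_divide_eq_eq)
    thus ?thesis by (simp add: mult.assoc)
  qed
  finally show ?thesis by (simp add: power2_eq_square)
qed

theorem mainTheorem4:
  fixes t :: "nat \<Rightarrow> real"
  assumes "\<forall>n\<ge>1. t n \<in> S_set n \<and>
             (\<exists>p. hd_inv_iter n (t n, 0) = Some p \<and> fst p = 0)"
  shows "\<not> convergent (\<lambda>n. snd (the (hd_inv_iter n (t n, 0))))"
proof
  let ?a = "\<lambda>n. snd (the (hd_inv_iter n (t n, 0)))"
  assume "convergent ?a"
  hence "Bseq ?a" by (rule convergent_imp_Bseq)
  then obtain B where B: "\<And>n. norm (?a n) \<le> B" by (auto simp: Bseq_def)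
  have sq: "(?a (Suc m))^2 \<ge> real (Suc m)" for m
  proof -
    from assms obtain p where "t (Suc m) \<in> S_set (Suc m)"
      "hd_inv_iter (Suc m) (t (Suc m), 0) = Some p" "fst p = 0" by force
    with sq_bound[of "t (Suc m)" m p] show ?thesis by simp
  qed
  define m where "m = nat (ceiling (B^2))"
  have "(?a (Suc m))^2 \<le> B^2"
    using B[of "Suc m"] abs_le_square_iff[of "?a (Suc m)" B] unfolding real_norm_def
    by (smt (verit) abs_ge_zero abs_le_square_iff)
  moreover have "B^2 \<le> real m" unfolding m_def by linarith
  ultimately show False using sq[of m] by linarith
qed

end
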